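(* Let $m\ge 1$, $n=3m$, and $t\ge 2$. Put $X_t=G_{n,t}\setminus a_{t-1}$ and $Y_t=X_t\setminus a_{t-2}$. Then $I(X_t)\simeq I(Y_t)$.
   Context: For a finite simple graph $G$, $I(G)$ is its independence complex (simplicial complex on $V(G)$ whose simplices are the independent sets); $G\setminus v$ is the induced subgraph on $V(G)\setminus\{v\}$. For integers $n\ge 2$, $t\ge 0$, the graph $G_{n,t}$ has vertex set $\{a_0,\dots,a_t\}\cup\{b_{i,j},c_{i,j}: 1\le i\le t,\ 1\le j\le n-1\}$, and its edges are exactly: $b_{i,j}\sim b_{i,j+1}$ and $c_{i,j}\sim c_{i,j+1}$ for $1\le i\le t$, $1\le j\le n-2$; $b_{i,n-1}\sim b_{i+1,1}$ and $c_{i,n-1}\sim c_{i+1,1}$ for $1\le i\le t-1$; and $a_{i-1}\sim b_{i,1}$, $a_{i-1}\sim c_{i,1}$, $a_i\sim b_{i,n-1}$, $a_i\sim c_{i,n-1}$ for $1\le i\le t$. *)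

theory Defs
  imports "HOL-Analysis.Analysis"
begin

text \<open>Finite simple graphs are given as a pair (vertex set, edge relation).
  Only edges between vertices of the vertex set are relevant.\<close>

type_synonym 'a graph = "'a set \<times> ('a \<Rightarrow> 'a \<Rightarrow> bool)"

definition verts :: "'a graph \<Rightarrow> 'a set" where "verts G = fst G"
definition adj :: "'a graph \<Rightarrow> 'a \<Rightarrow> 'a \<Rightarrow> bool" where
  "adj G x y = (x \<in> verts G \<and> y \<in> verts G \<and> snd G x y)"

definition del_vertex :: "'a graph \<Rightarrow> 'a \<Rightarrow> 'a graph" where
  "del_vertex G v = (verts G - {v}, \<lambda>x y. x \<noteq> v \<and> y \<noteq> v \<and> adj G x y)"

definition indep_complex :: "'a graph \<Rightarrow> 'a set set" where
  "indep_complex G = {S. finite S \<and> S \<subseteq> verts G \<and> (\<forall>x\<in>S. \<forall>y\<in>S. \<not> adj G x y)}"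

text \<open>Geometric realization of a simplicial complex K on a finite vertex set V:
  barycentric-coordinate functions V \<rightarrow> [0,1] summing to 1 whose support is a simplex,
  with the subspace topology of the product topology on R^V.\<close>
definition geom_real :: "'a set \<Rightarrow> 'a set set \<Rightarrow> ('a \<Rightarrow> real) topology" where
  "geom_real V K = subtopology (powertop_real V)
     {f \<in> topspace (powertop_real V). (\<forall>v\<in>V. 0 \<le> f v) \<and> sum f V = 1 \<and> {v\<in>V. f v \<noteq> 0} \<in> K}"

definition ind_space :: "'a graph \<Rightarrow> ('a \<Rightarrow> real) topology" where
  "ind_space G = geom_real (verts G) (indep_complex G)"

datatype vtx = A nat | B nat nat | C nat nat

definition G_verts :: "nat \<Rightarrow> nat \<Rightarrow> vtx set" where
  "G_verts n t = {A i | i. i \<le> t} \<union> {B i j | i j. 1 \<le> i \<and> i \<le> t \<and> 1 \<le> j \<and> j \<le> n - 1}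
     \<union> {C i j | i j. 1 \<le> i \<and> i \<le> t \<and> 1 \<le> j \<and> j \<le> n - 1}"

definition G_edge0 :: "nat \<Rightarrow> nat \<Rightarrow> vtx \<Rightarrow> vtx \<Rightarrow> bool" where
  "G_edge0 n t x y \<longleftrightarrow>
     (\<exists>i j. 1 \<le> i \<and> i \<le> t \<and> 1 \<le> j \<and> j \<le> n - 2 \<and>
        ((x = B i j \<and> y = B i (j+1)) \<or> (x = C i j \<and> y = C i (j+1)))) \<or>
     (\<exists>i. 1 \<le> i \<and> i \<le> t - 1 \<and>
        ((x = B i (n-1) \<and> y = B (i+1) 1) \<or> (x = C i (n-1) \<and> y = C (i+1) 1))) \<or>
     (\<exists>i. 1 \<le> i \<and> i \<le> t \<and>
        ((x = A (i-1) \<and> y = B i 1) \<or> (x = A (i-1) \<and> y = C i 1) \<or>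
         (x = A i \<and> y = B i (n-1)) \<or> (x = A i \<and> y = C i (n-1))))"

definition G_graph :: "nat \<Rightarrow> nat \<Rightarrow> vtx graph" where
  "G_graph n t = (G_verts n t, \<lambda>x y. G_edge0 n t x y \<or> G_edge0 n t y x)"

end

theory Submission
  imports Defs
begin


definition ssimp :: "'a set \<Rightarrow> 'a set set \<Rightarrow> ('a \<Rightarrow> real) set" where
  "ssimp V K = {f \<in> topspace (powertop_real V). (\<forall>v\<in>V. 0 \<le> f v) \<and> sum f V = 1 \<and> {v\<in>V. f v \<noteq> 0} \<in> K}"

lemma geom_real_ssimp: "geom_real V K = subtopology (powertop_real V) (ssimp V K)"
  unfolding geom_real_def ssimp_def by simp

lemma topspace_geom_real [simp]: "topspace (geom_real V K) = ssimp V K"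
  unfolding geom_real_ssimp by (auto simp: ssimp_def)

lemma ssimp_ext: "f \<in> ssimp V K \<Longrightarrow> f \<in> extensional V"
  by (auto simp: ssimp_def PiE_def)

lemma heq_retract:
  fixes T :: "('a \<Rightarrow> real) \<Rightarrow> ('a \<Rightarrow> real)"
  assumes K21: "K2 \<subseteq> K1" and down: "\<And>S S'. S \<in> K1 \<Longrightarrow> S' \<subseteq> S \<Longrightarrow> S' \<in> K1"
  and cont: "\<And>x. x \<in> V \<Longrightarrow> continuous_map (geom_real V K1) euclideanreal (\<lambda>f. T f x)"
  and into: "\<And>f. f \<in> ssimp V K1 \<Longrightarrow> T f \<in> ssimp V K2"
  and supp: "\<And>f. f \<in> ssimp V K1 \<Longrightarrow> {x\<in>V. f x \<noteq> 0} \<union> {x\<in>V. T f x \<noteq> 0} \<in> K1"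
  and fixT: "\<And>f. f \<in> ssimp V K2 \<Longrightarrow> T f = f"
  shows "geom_real V K1 homotopy_equivalent_space geom_real V K2"
proof -
  have sub: "ssimp V K2 \<subseteq> ssimp V K1" using K21 by (auto simp: ssimp_def)
  have cT: "continuous_map (geom_real V K1) (geom_real V K2) T"
    unfolding geom_real_ssimp[of V K2]
  proof (rule continuous_map_into_subtopology)
    show "continuous_map (geom_real V K1) (powertop_real V) T"
      unfolding continuous_map_componentwise
      using into cont by (auto simp: ssimp_def PiE_def)
    show "T \<in> topspace (geom_real V K1) \<rightarrow> ssimp V K2" using into by auto
  qed
  have cI: "continuous_map (geom_real V K2) (geom_real V K1) id"
    unfolding geom_real_ssimp
    by (simp add: continuous_map_from_subtopology continuous_map_into_subtopology sub
        continuous_map_in_subtopology Pi_iff subsetD[OF sub])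
  have h1: "homotopic_with (\<lambda>x. True) (geom_real V K2) (geom_real V K2) (T \<circ> id) id"
    by (rule homotopic_with_equal) (auto simp: fixT intro: continuous_map_eq[OF continuous_map_id])
  define h where "h = (\<lambda>(l::real, f::'a\<Rightarrow>real). restrict (\<lambda>x. (1-l) * T f x + l * f x) V)"
  have hin: "h (l, f) \<in> ssimp V K1" if "l \<in> {0..1}" "f \<in> ssimp V K1" for l f
  proof -
    have Tf: "T f \<in> ssimp V K1" using into that sub by auto
    have "{x\<in>V. h (l,f) x \<noteq> 0} \<subseteq> {x\<in>V. f x \<noteq> 0} \<union> {x\<in>V. T f x \<noteq> 0}"
      by (auto simp: h_def)
    then have "{x\<in>V. h (l,f) x \<noteq> 0} \<in> K1" using down supp that by blast
    moreover have "sum (h (l,f)) V = 1"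
    proof -
      have "sum (h (l,f)) V = (\<Sum>x\<in>V. (1-l) * T f x + l * f x)" by (simp add: h_def)
      also have "\<dots> = (1-l) * sum (T f) V + l * sum f V"
        by (simp add: sum.distrib sum_distrib_left)
      also have "\<dots> = 1" using Tf that by (simp add: ssimp_def)
      finally show ?thesis .
    qed
    moreover have "\<forall>x\<in>V. 0 \<le> h (l,f) x" using Tf that by (auto simp: h_def ssimp_def)
    ultimately show ?thesis by (auto simp: ssimp_def h_def)
  qed
  have ch: "continuous_map (prod_topology (top_of_set {0..1}) (geom_real V K1)) (geom_real V K1) h"
    unfolding geom_real_ssimp[of V K1, symmetric] 
  proof -
    have "continuous_map (prod_topology (top_of_set {0..1}) (geom_real V K1)) (powertop_real V) h"
      unfolding continuous_map_componentwise
    proof (intro conjI ballI)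
      show "h ` topspace (prod_topology (top_of_set {0..1}) (geom_real V K1)) \<subseteq> extensional V"
        by (auto simp: h_def)
      fix x assume x: "x \<in> V"
      have e: "(\<lambda>p. h p x) = (\<lambda>p. (1 - fst p) * T (snd p) x + fst p * snd p x)"
        using x by (auto simp: h_def)
      have c1: "continuous_map (prod_topology (top_of_set {0..1}) (geom_real V K1)) euclideanreal (\<lambda>p. T (snd p) x)"
        using continuous_map_compose[OF continuous_map_snd cont[OF x]] by (simp add: o_def)
      have c2: "continuous_map (prod_topology (top_of_set {0..1}) (geom_real V K1)) euclideanreal (\<lambda>p. snd p x)"
        using continuous_map_compose[OF continuous_map_snd continuous_map_from_subtopology[OF continuous_map_product_projection[OF x]]]
        unfolding geom_real_ssimp by (simp add: o_def)
      have c3: "continuous_map (prod_topology (top_of_set {0..1}) (geom_real V K1)) euclideanreal (\<lambda>p. fst p)"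
        using continuous_map_compose[OF continuous_map_fst continuous_map_from_subtopology[OF continuous_map_id]]
        by (simp add: o_def)
      show "continuous_map (prod_topology (top_of_set {0..1}) (geom_real V K1)) euclideanreal (\<lambda>p. h p x)"
        unfolding e by (intro continuous_intros c1 c2 c3)
    qed
    then show "continuous_map (prod_topology (top_of_set {0..1}) (geom_real V K1)) (geom_real V K1) h"
      unfolding geom_real_ssimp[of V K1]
      by (rule continuous_map_into_subtopology) (use hin in auto)
  qed
  have h2: "homotopic_with (\<lambda>x. True) (geom_real V K1) (geom_real V K1) (id \<circ> T) id"
    unfolding homotopic_with[where P="\<lambda>x. True", simplified]
  proof (intro exI conjI ballI)
    show "continuous_map (prod_topology (top_of_set {0..1}) (geom_real V K1)) (geom_real V K1) h" by (rule ch)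
    fix f assume f: "f \<in> topspace (geom_real V K1)"
    then have "T f \<in> extensional V" using into ssimp_ext by auto
    then show "h (0, f) = (id \<circ> T) f" by (auto simp: h_def extensional_def)
    show "h (1, f) = id f" using f ssimp_ext[of f V K1] by (auto simp: h_def extensional_def)
  qed
  show ?thesis unfolding homotopy_equivalent_space_def
    using cT cI h1 h2 by blast
qed

lemma geom_real_remove:
  assumes V: "finite V" "v \<in> V" and K: "\<And>S. S \<in> K \<Longrightarrow> v \<notin> S"
  shows "geom_real V K homeomorphic_space geom_real (V - {v}) K"
proof -
  define F where "F = (\<lambda>f::'a\<Rightarrow>real. restrict f (V - {v}))"
  define G where "G = (\<lambda>g::'a\<Rightarrow>real. restrict (\<lambda>x. if x = v then 0 else g x) V)"
  have fv: "f v = 0" if "f \<in> ssimp V K" for f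
    using that K[of "{x\<in>V. f x \<noteq> 0}"] V by (auto simp: ssimp_def)
  have gv: "{x \<in> V - {v}. g x \<noteq> 0} = {x \<in> V. G g x \<noteq> 0}" for g
    by (auto simp: G_def)
  have Fin: "F f \<in> ssimp (V - {v}) K" if f: "f \<in> ssimp V K" for f
  proof -
    have s: "sum f (V - {v}) = 1" using f fv[OF f] V by (simp add: ssimp_def sum_diff1)
    have e: "{x \<in> V - {v}. F f x \<noteq> 0} = {x\<in>V. f x \<noteq> 0}" using fv[OF f] by (auto simp: F_def)
    have "sum (F f) (V - {v}) = 1" using s by (simp add: F_def)
    then show ?thesis using f e by (simp add: ssimp_def F_def)
  qed
  have Gin: "G g \<in> ssimp V K" if g: "g \<in> ssimp (V - {v}) K" for g
  proof -
    have "sum (G g) V = sum (G g) (V - {v}) + G g v" using V by (simp add: sum_diff1)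
    also have "sum (G g) (V - {v}) = sum g (V - {v})" by (rule sum.cong) (auto simp: G_def)
    finally have s: "sum (G g) V = 1" using g V by (simp add: ssimp_def G_def)
    show ?thesis using g s gv[of g] by (auto simp: ssimp_def G_def)
  qed
  have cF: "continuous_map (geom_real V K) (geom_real (V - {v}) K) F"
    unfolding geom_real_ssimp[of "V - {v}"]
  proof (rule continuous_map_into_subtopology)
    show "continuous_map (geom_real V K) (powertop_real (V - {v})) F"
      unfolding continuous_map_componentwise
    proof (intro conjI ballI)
      show "F ` topspace (geom_real V K) \<subseteq> extensional (V - {v})" by (auto simp: F_def)
      fix x assume x: "x \<in> V - {v}"
      have "continuous_map (geom_real V K) euclideanreal (\<lambda>f. f x)"
        unfolding geom_real_ssimp using x
        by (intro continuous_map_from_subtopology continuous_map_product_projection) auto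
      then show "continuous_map (geom_real V K) euclideanreal (\<lambda>f. F f x)"
        using x by (simp add: F_def)
    qed
    show "F \<in> topspace (geom_real V K) \<rightarrow> ssimp (V - {v}) K" using Fin by auto
  qed
  have cG: "continuous_map (geom_real (V - {v}) K) (geom_real V K) G"
    unfolding geom_real_ssimp[of V]
  proof (rule continuous_map_into_subtopology)
    show "continuous_map (geom_real (V - {v}) K) (powertop_real V) G"
      unfolding continuous_map_componentwise
    proof (intro conjI ballI)
      show "G ` topspace (geom_real (V - {v}) K) \<subseteq> extensional V" by (auto simp: G_def)
      fix x assume x: "x \<in> V"
      show "continuous_map (geom_real (V - {v}) K) euclideanreal (\<lambda>f. G f x)"
      proof (cases "x = v")
        case True then show ?thesis by (simp add: G_def x)
      next
        case False
        have "continuous_map (geom_real (V - {v}) K) euclideanreal (\<lambda>f. f x)"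
          unfolding geom_real_ssimp using x False
          by (intro continuous_map_from_subtopology continuous_map_product_projection) auto
        then show ?thesis using x False by (simp add: G_def)
      qed
    qed
    show "G \<in> topspace (geom_real (V - {v}) K) \<rightarrow> ssimp V K" using Gin by auto
  qed
  have GF: "G (F f) = f" if "f \<in> ssimp V K" for f
    using fv[OF that] ssimp_ext[OF that] by (auto simp: F_def G_def extensional_def)
  have FG: "F (G g) = g" if "g \<in> ssimp (V - {v}) K" for g
    using ssimp_ext[OF that] by (auto simp: F_def G_def extensional_def)
  show ?thesis unfolding homeomorphic_space_def homeomorphic_maps_def
    using cF cG GF FG by auto
qed

lemma indep_down: "S \<in> indep_complex G \<Longrightarrow> S' \<subseteq> S \<Longrightarrow> S' \<in> indep_complex G"
  unfolding indep_complex_def by (auto intro: finite_subset)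

lemma proj_cont: "x \<in> V \<Longrightarrow> continuous_map (geom_real V K) euclideanreal (\<lambda>f. f x)"
  unfolding geom_real_ssimp
  by (intro continuous_map_from_subtopology continuous_map_product_projection)

lemma fold_heq:
  assumes fin: "finite (verts G)" and uV: "u \<in> verts G" and vV: "v \<in> verts G" and uv: "u \<noteq> v"
  and nuv: "\<not> adj G u v" "\<not> adj G v u" and nuu: "\<not> adj G u u"
  and dom1: "\<And>x. adj G u x \<Longrightarrow> adj G v x" and dom2: "\<And>x. adj G x u \<Longrightarrow> adj G x v"
  shows "ind_space G homotopy_equivalent_space ind_space (del_vertex G v)"
proof -
  define V where "V = verts G"
  define K1 where "K1 = indep_complex G"
  define K2 where "K2 = {S \<in> K1. v \<notin> S}"
  define T where "T = (\<lambda>f::'a\<Rightarrow>real. restrict (\<lambda>x. f x + f v * ((if x = u then 1 else 0) - (if x = v then 1 else 0))) V)"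
  have S': "{x\<in>V. f x \<noteq> 0} \<union> (if f v = 0 then {} else {u}) \<in> K1" if f: "f \<in> ssimp V K1" for f
  proof (cases "f v = 0")
    case True then show ?thesis using f by (simp add: ssimp_def)
  next
    case False
    have S: "{x\<in>V. f x \<noteq> 0} \<in> indep_complex G" using f by (simp add: ssimp_def K1_def)
    have "v \<in> {x\<in>V. f x \<noteq> 0}" using False vV V_def by auto
    then have "insert u {x\<in>V. f x \<noteq> 0} \<in> indep_complex G"
      using S uV nuu dom1 dom2 unfolding indep_complex_def V_def by blast
    then show ?thesis using False by (simp add: K1_def)
  qed
  have "geom_real V K1 homotopy_equivalent_space geom_real V K2"
  proof (rule heq_retract[where T=T])
    show "K2 \<subseteq> K1" by (auto simp: K2_def)
    show "\<And>S S'. S \<in> K1 \<Longrightarrow> S' \<subseteq> S \<Longrightarrow> S' \<in> K1" unfolding K1_def by (rule indep_down)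
    show "continuous_map (geom_real V K1) euclideanreal (\<lambda>f. T f x)" if "x \<in> V" for x
    proof -
      have e: "(\<lambda>f. T f x) = (\<lambda>f. f x + f v * ((if x = u then 1 else 0) - (if x = v then 1 else 0)))"
        using that by (auto simp: T_def)
      show ?thesis unfolding e using that vV V_def
        by (intro continuous_map_add continuous_map_real_mult_right proj_cont) auto
    qed
    show "T f \<in> ssimp V K2" if f: "f \<in> ssimp V K1" for f
    proof -
      have s: "sum (T f) V = 1"
        using f uV vV fin by (simp add: T_def V_def ssimp_def sum.distrib sum_subtractf flip: sum_distrib_left)
      have "f u \<ge> 0" "f v \<ge> 0" using f uV vV V_def by (auto simp: ssimp_def)
      then have nn: "\<forall>x\<in>V. 0 \<le> T f x" using f uv by (auto simp: T_def ssimp_def)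
      have "{x\<in>V. T f x \<noteq> 0} \<subseteq> {x\<in>V. f x \<noteq> 0} \<union> (if f v = 0 then {} else {u})"
        by (auto simp: T_def)
      then have "{x\<in>V. T f x \<noteq> 0} \<in> K1" using S'[OF f] unfolding K1_def by (rule indep_down[rotated])
      moreover have "v \<notin> {x\<in>V. T f x \<noteq> 0}" by (simp add: T_def uv[symmetric])
      ultimately show ?thesis using s nn by (simp add: ssimp_def K2_def T_def)
    qed
    show "{x\<in>V. f x \<noteq> 0} \<union> {x\<in>V. T f x \<noteq> 0} \<in> K1" if f: "f \<in> ssimp V K1" for f
    proof -
      have "{x\<in>V. f x \<noteq> 0} \<union> {x\<in>V. T f x \<noteq> 0} \<subseteq> {x\<in>V. f x \<noteq> 0} \<union> (if f v = 0 then {} else {u})"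
        by (auto simp: T_def)
      then show ?thesis using S'[OF f] unfolding K1_def by (rule indep_down[rotated])
    qed
    show "T f = f" if f: "f \<in> ssimp V K2" for f
    proof -
      have "f v = 0" using f vV V_def by (auto simp: ssimp_def K2_def)
      then show ?thesis using ssimp_ext[OF f] by (auto simp: T_def extensional_def)
    qed
  qed
  also have "geom_real V K2 homotopy_equivalent_space geom_real (V - {v}) K2"
    by (rule homeomorphic_imp_homotopy_equivalent_space, rule geom_real_remove)
       (use fin vV V_def K2_def in auto)
  also have "geom_real (V - {v}) K2 = ind_space (del_vertex G v)"
  proof -
    have "K2 = indep_complex (del_vertex G v)"
      unfolding K2_def K1_def indep_complex_def del_vertex_def adj_def verts_def by auto
    moreover have "verts (del_vertex G v) = V - {v}" by (simp add: del_vertex_def verts_def V_def)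
    ultimately show ?thesis by (simp add: ind_space_def)
  qed
  finally show ?thesis by (simp add: ind_space_def V_def K1_def)
qed

lemma edge_heq:
  assumes fin: "finite (verts G)" and uV: "u \<in> verts G" and vV: "v \<in> verts G" and wV: "w \<in> verts G"
  and uv: "u \<noteq> v" and uw: "u \<noteq> w" and vw: "v \<noteq> w"
  and nvw: "\<not> adj G v w" "\<not> adj G w v" and nuu: "\<not> adj G u u"
  and dom1: "\<And>x. adj G u x \<Longrightarrow> adj G v x \<or> adj G w x"
  and dom2: "\<And>x. adj G x u \<Longrightarrow> adj G x v \<or> adj G x w"
  shows "ind_space G homotopy_equivalent_space
         ind_space (verts G, \<lambda>x y. snd G x y \<or> (x = v \<and> y = w) \<or> (x = w \<and> y = v))"
proof -
  define V where "V = verts G"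
  define G' where "G' = (verts G, \<lambda>x y. snd G x y \<or> (x = v \<and> y = w) \<or> (x = w \<and> y = v))"
  have adj': "adj G' x y \<longleftrightarrow> adj G x y \<or> (x \<in> V \<and> y \<in> V \<and> ((x = v \<and> y = w) \<or> (x = w \<and> y = v)))" for x y
    by (auto simp: G'_def adj_def verts_def V_def)
  define K1 where "K1 = indep_complex G"
  define K2 where "K2 = indep_complex G'"
  have vG': "verts G' = V" by (simp add: G'_def verts_def V_def)
  define a where "a = (\<lambda>f::'a\<Rightarrow>real. min (f v) (f w))"
  define T where "T = (\<lambda>f::'a\<Rightarrow>real. restrict (\<lambda>x. f x + a f * ((if x = u then 2 else 0) - (if x = v then 1 else 0) - (if x = w then 1 else 0))) V)"
  have S': "{x\<in>V. f x \<noteq> 0} \<union> (if a f = 0 then {} else {u}) \<in> K1" if f: "f \<in> ssimp V K1" for f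
  proof (cases "a f = 0")
    case True then show ?thesis using f by (simp add: ssimp_def)
  next
    case False
    have S: "{x\<in>V. f x \<noteq> 0} \<in> indep_complex G" using f by (simp add: ssimp_def K1_def)
    have "f v \<ge> 0" "f w \<ge> 0" using f vV wV V_def by (auto simp: ssimp_def)
    then have "f v \<noteq> 0" "f w \<noteq> 0" using False by (auto simp: a_def split: if_splits)
    then have "v \<in> {x\<in>V. f x \<noteq> 0}" "w \<in> {x\<in>V. f x \<noteq> 0}" using vV wV V_def by auto
    then have "insert u {x\<in>V. f x \<noteq> 0} \<in> indep_complex G"
      using S uV nuu dom1 dom2 unfolding indep_complex_def V_def by blast
    then show ?thesis using False by (simp add: K1_def)
  qed
  have "geom_real V K1 homotopy_equivalent_space geom_real V K2"
  proof (rule heq_retract[where T=T])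
    show "K2 \<subseteq> K1" unfolding K2_def K1_def indep_complex_def adj' vG' V_def by auto
    show "\<And>S S'. S \<in> K1 \<Longrightarrow> S' \<subseteq> S \<Longrightarrow> S' \<in> K1" unfolding K1_def by (rule indep_down)
    show "continuous_map (geom_real V K1) euclideanreal (\<lambda>f. T f x)" if "x \<in> V" for x
    proof -
      have e: "(\<lambda>f. T f x) = (\<lambda>f. f x + min (f v) (f w) * ((if x = u then 2 else 0) - (if x = v then 1 else 0) - (if x = w then 1 else 0)))"
        using that by (auto simp: T_def a_def)
      show ?thesis unfolding e using that vV wV V_def
        by (intro continuous_map_add continuous_map_real_mult_right continuous_map_real_min proj_cont) auto
    qed
    show "T f \<in> ssimp V K2" if f: "f \<in> ssimp V K1" for f
    proof -
      have s: "sum (T f) V = 1"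
        using f uV vV wV fin by (simp add: T_def V_def ssimp_def sum.distrib sum_subtractf flip: sum_distrib_left)
      have p: "f v \<ge> 0" "f w \<ge> 0" "f u \<ge> 0" using f uV vV wV V_def by (auto simp: ssimp_def)
      have am: "a f \<le> f v" "a f \<le> f w" "a f \<ge> 0" using p by (auto simp: a_def)
      have nn: "\<forall>x\<in>V. 0 \<le> T f x" using f uv uw vw p am by (auto simp: T_def ssimp_def)
      have sub: "{x\<in>V. T f x \<noteq> 0} \<subseteq> {x\<in>V. f x \<noteq> 0} \<union> (if a f = 0 then {} else {u})"
        using uv uw vw p am by (auto simp: T_def)
      then have i1: "{x\<in>V. T f x \<noteq> 0} \<in> K1" using S'[OF f] unfolding K1_def by (rule indep_down[rotated])
      have nb: "\<not> (T f v \<noteq> 0 \<and> T f w \<noteq> 0)" using uv uw vw vV wV V_def by (auto simp: T_def a_def min_def)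
      have "{x\<in>V. T f x \<noteq> 0} \<in> K2" using i1 nb unfolding K1_def K2_def indep_complex_def adj'
        by (auto simp: G'_def verts_def V_def)
      then show ?thesis using s nn by (simp add: ssimp_def T_def)
    qed
    show "{x\<in>V. f x \<noteq> 0} \<union> {x\<in>V. T f x \<noteq> 0} \<in> K1" if f: "f \<in> ssimp V K1" for f
    proof -
      have p: "f v \<ge> 0" "f w \<ge> 0" "f u \<ge> 0" using f uV vV wV V_def by (auto simp: ssimp_def)
      have am: "a f \<le> f v" "a f \<le> f w" "a f \<ge> 0" using p by (auto simp: a_def)
      have "{x\<in>V. f x \<noteq> 0} \<union> {x\<in>V. T f x \<noteq> 0} \<subseteq> {x\<in>V. f x \<noteq> 0} \<union> (if a f = 0 then {} else {u})"
        using uv uw vw p am by (auto simp: T_def)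
      then show ?thesis using S'[OF f] unfolding K1_def by (rule indep_down[rotated])
    qed
    show "T f = f" if f: "f \<in> ssimp V K2" for f
    proof -
      have ind: "{x\<in>V. f x \<noteq> 0} \<in> indep_complex G'" using f by (simp add: ssimp_def K2_def)
      have "\<not> (f v \<noteq> 0 \<and> f w \<noteq> 0)"
      proof
        assume "f v \<noteq> 0 \<and> f w \<noteq> 0"
        then have "v \<in> {x\<in>V. f x \<noteq> 0}" "w \<in> {x\<in>V. f x \<noteq> 0}" using vV wV V_def by auto
        then show False using ind unfolding indep_complex_def adj' using vV wV V_def by blast
      qed
      moreover have "f v \<ge> 0" "f w \<ge> 0" using f vV wV V_def by (auto simp: ssimp_def)
      ultimately have "a f = 0" by (auto simp: a_def min_def)
      then show ?thesis using ssimp_ext[OF f] by (auto simp: T_def extensional_def)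
    qed
  qed
  moreover have "verts G' = V" by (simp add: G'_def verts_def V_def)
  ultimately show ?thesis by (simp add: ind_space_def V_def K1_def K2_def G'_def)
qed



definition P :: "bool \<Rightarrow> nat \<Rightarrow> nat \<Rightarrow> vtx" where "P s i j = (if s then B i j else C i j)"

lemma P_inj[simp]: "P s i j = P s' i' j' \<longleftrightarrow> s = s' \<and> i = i' \<and> j = j'"
  by (auto simp: P_def)
lemma P_A[simp]: "P s i j \<noteq> A a" "A a \<noteq> P s i j" by (auto simp: P_def)

lemma vtx_cases: "(\<And>a. x = A a \<Longrightarrow> Q) \<Longrightarrow> (\<And>s i j. x = P s i j \<Longrightarrow> Q) \<Longrightarrow> Q"
  by (cases x) (auto simp: P_def, metis, metis)

lemma e_AA[simp]: "G_edge0 n t (A a) (A b) = False" by (auto simp: G_edge0_def)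
lemma e_PA[simp]: "G_edge0 n t (P s i j) (A a) = False" by (auto simp: G_edge0_def P_def)
lemma e_AP[simp]: "G_edge0 n t (A a) (P s i j) \<longleftrightarrow> 1 \<le> i \<and> i \<le> t \<and> ((a = i-1 \<and> j = 1) \<or> (a = i \<and> j = n-1))"
  by (cases s) (auto simp: G_edge0_def P_def)
lemma e_PP[simp]: "G_edge0 n t (P s i j) (P s' i' j') \<longleftrightarrow> s = s' \<and>
   ((1\<le>i \<and> i\<le>t \<and> 1\<le>j \<and> j\<le>n-2 \<and> i' = i \<and> j' = j+1) \<or> (1 \<le> i \<and> i \<le> t-1 \<and> j = n-1 \<and> i' = i+1 \<and> j' = 1))"
  by (cases s; cases s') (auto simp: G_edge0_def P_def)

lemma A_in[simp]: "A a \<in> G_verts n t \<longleftrightarrow> a \<le> t" by (auto simp: G_verts_def)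
lemma P_in[simp]: "P s i j \<in> G_verts n t \<longleftrightarrow> 1 \<le> i \<and> i \<le> t \<and> 1 \<le> j \<and> j \<le> n-1"
  by (cases s) (auto simp: G_verts_def P_def)

lemma fin_G: "finite (G_verts n t)"
proof -
  have "G_verts n t \<subseteq> A ` {..t} \<union> (\<lambda>(s,i,j). P s i j) ` (UNIV \<times> {..t} \<times> {..n})"
  proof
    fix x assume x: "x \<in> G_verts n t"
    show "x \<in> A ` {..t} \<union> (\<lambda>(s,i,j). P s i j) ` (UNIV \<times> {..t} \<times> {..n})"
    proof (rule vtx_cases[of x])
      fix a assume "x = A a" then show ?thesis using x by auto
    next
      fix s i j assume e: "x = P s i j"
      then have "(s,i,j) \<in> UNIV \<times> {..t} \<times> {..n}" using x by auto
      then show ?thesis using e by force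
    qed
  qed
  then show ?thesis by (rule finite_subset) auto
qed

abbreviation "XX n t \<equiv> del_vertex (G_graph n t) (A (t-1))"

lemma verts_X: "verts (XX n t) = G_verts n t - {A (t-1)}"
  by (simp add: del_vertex_def verts_def G_graph_def)

lemma adj_X: "adj (XX n t) x y \<longleftrightarrow> x \<in> G_verts n t \<and> y \<in> G_verts n t \<and> x \<noteq> A(t-1) \<and> y \<noteq> A(t-1) \<and>
   (G_edge0 n t x y \<or> G_edge0 n t y x)"
  by (auto simp: adj_def del_vertex_def verts_def G_graph_def)

definition pos :: "nat \<Rightarrow> nat \<Rightarrow> bool \<Rightarrow> nat \<Rightarrow> vtx" where
  "pos n t s l = (if l \<le> n - 1 then P s (t-1) l else P s t (l - (n-1)))"

lemma nbr:
  assumes n3: "n \<ge> 3" and t2: "t \<ge> 2" and l2: "2 \<le> l" and ln: "l \<le> 2*n-3" and a: "adj (XX n t) (pos n t s l) x"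
  shows "x = pos n t s (l-1) \<or> x = pos n t s (l+1)"
proof (rule vtx_cases[of x])
  fix a assume "x = A a" then show ?thesis using a n3 t2 l2 ln unfolding adj_X
    by (cases "l \<le> n - 1") (auto simp: pos_def)
next
  fix s' i j assume x: "x = P s' i j"
  show ?thesis
  proof (cases "l \<le> n - 1")
    case True
    then have p: "pos n t s l = P s (t-1) l" by (simp add: pos_def)
    have "G_edge0 n t (P s (t-1) l) (P s' i j) \<or> G_edge0 n t (P s' i j) (P s (t-1) l)"
      using a unfolding adj_X p x by blast
    then have "(s' = s \<and> i = t-1 \<and> j = l+1 \<and> l \<le> n-2) \<or> (s' = s \<and> i = t \<and> j = 1 \<and> l = n-1)
       \<or> (s' = s \<and> i = t-1 \<and> j = l-1)"
      using n3 t2 l2 ln True unfolding e_PP by auto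
    then show ?thesis using True n3 t2 l2 unfolding x by (auto simp: pos_def)
  next
    case False
    then have p: "pos n t s l = P s t (l-(n-1))" by (simp add: pos_def)
    have "G_edge0 n t (P s t (l-(n-1))) (P s' i j) \<or> G_edge0 n t (P s' i j) (P s t (l-(n-1)))"
      using a unfolding adj_X p x by blast
    then have "(s' = s \<and> i = t \<and> j = l-(n-1)+1) \<or> (s' = s \<and> i = t \<and> j = l-(n-1)-1 \<and> l \<ge> n+1)
       \<or> (s' = s \<and> i = t-1 \<and> j = n-1 \<and> l = n)"
      using n3 t2 l2 ln False unfolding e_PP by auto
    then show ?thesis using False n3 t2 l2 unfolding x by (auto simp: pos_def)
  qed
qed

lemma pos_in: "n \<ge> 3 \<Longrightarrow> t \<ge> 2 \<Longrightarrow> 1 \<le> l \<Longrightarrow> l \<le> 2*n-2 \<Longrightarrow> pos n t s l \<in> verts (XX n t)"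
  unfolding verts_X by (auto simp: pos_def)

lemma pos_inj: "n \<ge> 3 \<Longrightarrow> t \<ge> 1 \<Longrightarrow> 1 \<le> l \<Longrightarrow> l \<le> 2*n-2 \<Longrightarrow> 1 \<le> l' \<Longrightarrow> l' \<le> 2*n-2 \<Longrightarrow>
   pos n t s l = pos n t s' l' \<longleftrightarrow> s = s' \<and> l = l'"
  by (auto simp: pos_def split: if_splits)

lemma pos_adj: assumes "n \<ge> 3" "t \<ge> 2" "1 \<le> l" "l \<le> 2*n-3"
  shows "adj (XX n t) (pos n t s l) (pos n t s (l+1))"
proof -
  have "G_edge0 n t (pos n t s l) (pos n t s (l+1))"
    using assms by (auto simp: pos_def)
  then show ?thesis unfolding adj_X using pos_in[of n t] assms unfolding verts_X by auto
qed

lemma X_sym: "adj (XX n t) x y \<longleftrightarrow> adj (XX n t) y x"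
  unfolding adj_X by auto

lemma X_irr: "\<not> adj (XX n t) x x"
  unfolding adj_X by (rule vtx_cases[of x]) auto

lemma v_adj1: "n \<ge> 3 \<Longrightarrow> t \<ge> 2 \<Longrightarrow> adj (XX n t) (A (t-2)) (pos n t s 1)"
  unfolding adj_X by (auto simp: pos_def)

lemma v_nadj: "n \<ge> 3 \<Longrightarrow> t \<ge> 2 \<Longrightarrow> 2 \<le> l \<Longrightarrow> l \<le> 2*n-2 \<Longrightarrow> \<not> adj (XX n t) (A (t-2)) (pos n t s l)"
  unfolding adj_X by (auto simp: pos_def)

lemma At_nbr: assumes "n \<ge> 3" "t \<ge> 2" "adj (XX n t) (A t) x" shows "\<exists>s. x = pos n t s (2*n-2)"
proof (rule vtx_cases[of x])
  fix a assume "x = A a" then show ?thesis using assms unfolding adj_X by auto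
next
  fix s i j assume x: "x = P s i j"
  then have "i = t \<and> j = n - 1" using assms unfolding adj_X by auto
  then show ?thesis using x assms by (auto simp: pos_def)
qed

definition HH :: "nat \<Rightarrow> nat \<Rightarrow> vtx set \<Rightarrow> vtx graph" where
  "HH n t W = (verts (XX n t), \<lambda>x y. snd (XX n t) x y \<or> (x = A (t-2) \<and> y \<in> W) \<or> (y = A (t-2) \<and> x \<in> W))"

lemma verts_H[simp]: "verts (HH n t W) = verts (XX n t)"
  by (simp add: HH_def verts_def)

lemma adj_H: "adj (HH n t W) x y \<longleftrightarrow> adj (XX n t) x y \<or>
   (x \<in> verts (XX n t) \<and> y \<in> verts (XX n t) \<and> ((x = A (t-2) \<and> y \<in> W) \<or> (y = A (t-2) \<and> x \<in> W)))"
  by (auto simp: adj_def HH_def verts_def)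

lemma H_sym: "adj (HH n t W) x y \<longleftrightarrow> adj (HH n t W) y x"
  unfolding adj_H using X_sym by blast

lemma fin_X: "finite (verts (XX n t))" unfolding verts_X using fin_G by auto

lemma vX: "t \<ge> 2 \<Longrightarrow> A (t-2) \<in> verts (XX n t)" unfolding verts_X by auto

lemma step:
  assumes m: "m \<ge> 1" "n = 3*m" "t \<ge> 2" and j: "1 \<le> j" "j \<le> 2*m-1"
  and wW: "pos n t s (3*j+1) \<notin> W" and uW: "pos n t s (3*j-1) \<notin> W" and vW: "A(t-2) \<notin> W"
  and prev: "j = 1 \<or> pos n t s (3*j-2) \<in> W"
  shows "ind_space (HH n t W) homotopy_equivalent_space ind_space (HH n t (insert (pos n t s (3*j+1)) W))"
proof -
  define u where "u = pos n t s (3*j-1)"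
  define w where "w = pos n t s (3*j+1)"
  define v where "v = A (t-2)"
  have n3: "n \<ge> 3" using m by auto
  have uV: "u \<in> verts (XX n t)" unfolding u_def using m j by (intro pos_in) auto
  have wV: "w \<in> verts (XX n t)" unfolding w_def using m j by (intro pos_in) auto
  have vV: "v \<in> verts (XX n t)" unfolding v_def using m by (intro vX) auto
  have uw: "u \<noteq> w" unfolding u_def w_def using m j by (subst pos_inj) auto
  have uv: "u \<noteq> v" "w \<noteq> v" unfolding u_def w_def v_def pos_def by auto
  have nvw: "\<not> adj (XX n t) v w" unfolding v_def w_def using m j by (intro v_nadj) auto
  have e: "(verts (HH n t W), \<lambda>x y. snd (HH n t W) x y \<or> (x = v \<and> y = w) \<or> (x = w \<and> y = v))
        = HH n t (insert w W)"
    by (auto simp: HH_def verts_def v_def fun_eq_iff)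
  have dom1: "adj (HH n t W) v x \<or> adj (HH n t W) w x" if a: "adj (HH n t W) u x" for x
  proof -
    have "adj (XX n t) u x" using a uv uW unfolding adj_H u_def v_def by auto
    then have "x = pos n t s (3*j-1-1) \<or> x = pos n t s (3*j-1+1)"
      unfolding u_def using m j by (intro nbr) auto
    then show ?thesis
    proof
      assume x: "x = pos n t s (3*j-1-1)"
      show ?thesis
      proof (cases "j = 1")
        case True
        then have "x = pos n t s 1" using x by simp
        then have "adj (XX n t) v x" unfolding v_def using m v_adj1[of n t s] by simp
        then show ?thesis unfolding adj_H by auto
      next
        case False
        then have "x \<in> W" using prev x by (simp add: numeral_eq_Suc)
        moreover have "x \<in> verts (XX n t)" unfolding x using m j by (intro pos_in) auto
        ultimately show ?thesis using vV unfolding adj_H v_def by auto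
      qed
    next
      assume x: "x = pos n t s (3*j-1+1)"
      have "adj (XX n t) x w" unfolding x w_def using m j pos_adj[of n t "3*j" s] by auto
      then show ?thesis unfolding adj_H using X_sym by blast
    qed
  qed
  have "ind_space (HH n t W) homotopy_equivalent_space
         ind_space (verts (HH n t W), \<lambda>x y. snd (HH n t W) x y \<or> (x = v \<and> y = w) \<or> (x = w \<and> y = v))"
  proof (rule edge_heq)
    show "finite (verts (HH n t W))" using fin_X by simp
    show "u \<in> verts (HH n t W)" "v \<in> verts (HH n t W)" "w \<in> verts (HH n t W)" using uV vV wV by auto
    show "u \<noteq> v" "u \<noteq> w" "v \<noteq> w" using uv uw by auto
    show "\<not> adj (HH n t W) v w" using nvw wW uv unfolding adj_H w_def v_def by auto
    then show "\<not> adj (HH n t W) w v" using H_sym by blast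
    show "\<not> adj (HH n t W) u u" using X_irr uv unfolding adj_H v_def by auto
    show "\<And>x. adj (HH n t W) u x \<Longrightarrow> adj (HH n t W) v x \<or> adj (HH n t W) w x" by (rule dom1)
    show "\<And>x. adj (HH n t W) x u \<Longrightarrow> adj (HH n t W) x v \<or> adj (HH n t W) x w"
      using dom1 H_sym by blast
  qed
  then show ?thesis unfolding e by (simp add: w_def)
qed



definition Wk :: "nat \<Rightarrow> nat \<Rightarrow> nat \<Rightarrow> vtx set" where
  "Wk n t k = {pos n t s (3*i+1) | s i. 1 \<le> i \<and> i \<le> k}"

lemma H_empty: "ind_space (HH n t {}) = ind_space (XX n t)"
proof -
  have "adj (HH n t {}) = adj (XX n t)" by (intro ext) (simp add: adj_H)
  then show ?thesis by (simp add: ind_space_def indep_complex_def)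
qed

lemma chain:
  assumes m: "m \<ge> 1" "n = 3*m" "t \<ge> 2"
  shows "k \<le> 2*m-1 \<Longrightarrow> ind_space (XX n t) homotopy_equivalent_space ind_space (HH n t (Wk n t k))"
proof (induction k)
  case 0
  have "Wk n t 0 = {}" by (auto simp: Wk_def)
  then show ?case using H_empty homotopy_equivalent_space_refl by metis
next
  case (Suc k)
  define j where "j = Suc k"
  have j: "1 \<le> j" "j \<le> 2*m-1" using Suc.prems j_def by auto
  have n3: "n \<ge> 3" using m by auto
  have inW: "pos n t s l \<in> Wk n t k \<longleftrightarrow> (\<exists>i. l = 3*i+1 \<and> 1 \<le> i \<and> i \<le> k)"
    if "1 \<le> l" "l \<le> 2*n-2" for s l
  proof
    assume "pos n t s l \<in> Wk n t k"
    then obtain s' i where e: "pos n t s l = pos n t s' (3*i+1)" "1 \<le> i" "i \<le> k" by (auto simp: Wk_def)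
    then have "l = 3*i+1" using pos_inj[of n t l "3*i+1" s s'] that m Suc.prems by auto
    then show "\<exists>i. l = 3*i+1 \<and> 1 \<le> i \<and> i \<le> k" using e by auto
  qed (auto simp: Wk_def)
  define W1 where "W1 = insert (pos n t True (3*j+1)) (Wk n t k)"
  have "ind_space (HH n t (Wk n t k)) homotopy_equivalent_space ind_space (HH n t W1)"
    unfolding W1_def
  proof (rule step[OF m j])
    show "pos n t True (3 * j + 1) \<notin> Wk n t k" using inW[of "3*j+1" True] j m j_def by auto
    have nm: "\<not> (\<exists>i. 3*j-1 = 3*i+1 \<and> 1 \<le> i \<and> i \<le> k)"
    proof
      assume "\<exists>i. 3*j-1 = 3*i+1 \<and> 1 \<le> i \<and> i \<le> k"
      then obtain i where "3*j-1 = 3*i+1" by blast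
      then have "3*j = 3*i+2" using j by linarith
      then show False by presburger
    qed
    show "pos n t True (3 * j - 1) \<notin> Wk n t k" using inW[of "3*j-1" True] j m nm by auto
    show "A (t - 2) \<notin> Wk n t k" by (auto simp: Wk_def pos_def)
    show "j = 1 \<or> pos n t True (3 * j - 2) \<in> Wk n t k" using inW[of "3*j-2" True] j m j_def by auto
  qed
  also have "ind_space (HH n t W1) homotopy_equivalent_space
     ind_space (HH n t (insert (pos n t False (3*j+1)) W1))"
  proof (rule step[OF m j])
    show "pos n t False (3 * j + 1) \<notin> W1" using inW[of "3*j+1" False] j m j_def 
      pos_inj[of n t "3*j+1" "3*j+1" False True] unfolding W1_def by auto
    have nm: "\<not> (\<exists>i. 3*j-1 = 3*i+1 \<and> 1 \<le> i \<and> i \<le> k)"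
    proof
      assume "\<exists>i. 3*j-1 = 3*i+1 \<and> 1 \<le> i \<and> i \<le> k"
      then obtain i where "3*j-1 = 3*i+1" by blast
      then have "3*j = 3*i+2" using j by linarith
      then show False by presburger
    qed
    show "pos n t False (3 * j - 1) \<notin> W1" using inW[of "3*j-1" False] j m nm
      pos_inj[of n t "3*j-1" "3*j+1" False True] unfolding W1_def by auto
    show "A (t - 2) \<notin> W1" by (auto simp: W1_def Wk_def pos_def)
    show "j = 1 \<or> pos n t False (3 * j - 2) \<in> W1" using inW[of "3*j-2" False] j m j_def unfolding W1_def by auto
  qed
  also have "insert (pos n t False (3*j+1)) W1 = Wk n t (Suc k)"
  proof (rule set_eqI, rule iffI)
    fix x assume "x \<in> insert (pos n t False (3*j+1)) W1"
    then show "x \<in> Wk n t (Suc k)" unfolding W1_def Wk_def j_def by fastforce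
  next
    fix x assume "x \<in> Wk n t (Suc k)"
    then obtain s i where x: "x = pos n t s (3*i+1)" "1 \<le> i" "i \<le> Suc k" unfolding Wk_def by blast
    show "x \<in> insert (pos n t False (3*j+1)) W1"
    proof (cases "i = Suc k")
      case True then show ?thesis using x unfolding W1_def j_def by (cases s) auto
    next
      case False then have "i \<le> k" using x by auto
      then have "x \<in> Wk n t k" unfolding Wk_def x(1) using x(2) by blast
      then show ?thesis unfolding W1_def by blast
    qed
  qed
  finally have L: "ind_space (HH n t (Wk n t k)) homotopy_equivalent_space ind_space (HH n t (Wk n t (Suc k)))" .
  have IH: "ind_space (XX n t) homotopy_equivalent_space ind_space (HH n t (Wk n t k))"
    using Suc.IH Suc.prems by simp
  show ?case by (rule homotopy_eqv_trans[OF IH L])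
qed

lemma del_H: "t \<ge> 2 \<Longrightarrow> ind_space (del_vertex (HH n t W) (A (t-2))) = ind_space (del_vertex (XX n t) (A (t-2)))"
proof -
  have a: "adj (del_vertex G v) x y \<longleftrightarrow> x \<noteq> v \<and> y \<noteq> v \<and> adj G x y" for G :: "vtx graph" and v x y
    by (auto simp: adj_def del_vertex_def verts_def)
  have vv: "verts (del_vertex G v) = verts G - {v}" for G :: "vtx graph" and v
    by (simp add: del_vertex_def verts_def)
  have "adj (del_vertex (HH n t W) (A (t-2))) = adj (del_vertex (XX n t) (A (t-2)))"
    by (intro ext) (auto simp: a adj_H)
  then show ?thesis by (simp add: ind_space_def indep_complex_def vv)
qed

theorem lemma3p13:
  fixes m n t :: nat
  assumes "m \<ge> 1" and "n = 3 * m" and "t \<ge> 2"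
  shows "ind_space (del_vertex (G_graph n t) (A (t - 1)))
           homotopy_equivalent_space
         ind_space (del_vertex (del_vertex (G_graph n t) (A (t - 1))) (A (t - 2)))"
proof -
  note m = assms
  have n3: "n \<ge> 3" using m by auto
  define Wf where "Wf = Wk n t (2*m-1)"
  have c: "ind_space (XX n t) homotopy_equivalent_space ind_space (HH n t Wf)"
    unfolding Wf_def by (rule chain[OF m]) simp
  have f: "ind_space (HH n t Wf) homotopy_equivalent_space ind_space (del_vertex (HH n t Wf) (A (t-2)))"
  proof (rule fold_heq)
    show "finite (verts (HH n t Wf))" using fin_X by simp
    show "A t \<in> verts (HH n t Wf)" using m unfolding verts_H verts_X by auto
    show "A (t-2) \<in> verts (HH n t Wf)" using m vX by simp
    show "A t \<noteq> A (t-2)" using m by simp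
    have nW: "A a \<notin> Wf" for a by (auto simp: Wf_def Wk_def pos_def)
    show "\<not> adj (HH n t Wf) (A t) (A (t-2))" "\<not> adj (HH n t Wf) (A (t-2)) (A t)"
      using nW m unfolding adj_H adj_X by auto
    show "\<not> adj (HH n t Wf) (A t) (A t)" using nW m X_irr unfolding adj_H by auto
    have d: "adj (HH n t Wf) (A (t-2)) x" if a: "adj (HH n t Wf) (A t) x" for x
    proof -
      have "adj (XX n t) (A t) x" using a nW m unfolding adj_H by auto
      from At_nbr[OF n3 m(3) this] obtain s where x: "x = pos n t s (2*n-2)" by blast
      have e: "2*n-2 = 3*(2*m-1)+1" using m by auto
      have "pos n t s (3*(2*m-1)+1) \<in> Wk n t (2*m-1)" unfolding Wk_def using m(1)
        by (intro CollectI exI[of _ s] exI[of _ "2*m-1"]) auto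
      then have "x \<in> Wf" unfolding Wf_def x e .
      moreover have "x \<in> verts (XX n t)" unfolding x using n3 m by (intro pos_in) auto
      ultimately show ?thesis using vX[of t n] m unfolding adj_H by auto
    qed
    show "\<And>x. adj (HH n t Wf) (A t) x \<Longrightarrow> adj (HH n t Wf) (A (t-2)) x" by (rule d)
    show "\<And>x. adj (HH n t Wf) x (A t) \<Longrightarrow> adj (HH n t Wf) x (A (t-2))" using d H_sym by blast
  qed
  show ?thesis using homotopy_eqv_trans[OF c f] del_H[OF m(3), of n Wf] by simp
qed

end
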